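(* Let $K,k,l\in\mathbb{N}$ with $K\ge k+l$ and $0\le l-k\le 2$. Let $\bar a,\bar b$ be binary sequences with $|\bar a|\ge|\bar b|$ such that $\bar a$ is top $l$ full and $\bar b$ is top $k$ full. Then $\mathrm{oe\_combine}_K(\bar a,\bar b)$ is top $l+k$ full.
   Context: A binary sequence $\bar r$ is top $k'$ full if it has the form $1^{k'}\bar r'$ for some binary $\bar r'$ (in particular $|\bar r|\ge k'$). For sequences $\bar a=\langle a_1,\dots,a_p\rangle$, $\bar b=\langle b_1,\dots,b_q\rangle$ with $p\ge q$, $\mathrm{zip}(\bar a,\bar b)=\langle a_1,b_1,a_2,b_2,\dots,a_q,b_q,a_{q+1},\dots,a_p\rangle$. The network $\mathrm{oe\_combine}_K(\bar a,\bar b)$ is defined as: let $\bar z=\mathrm{zip}(\bar a,\bar b)$; for each $i=1,\dots,\lfloor\min(K,|\bar z|-1)/2\rfloor$ replace the pair $(z_{2i},z_{2i+1})$ by $(\max(z_{2i},z_{2i+1}),\min(z_{2i},z_{2i+1}))$; return $\bar z$. *)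

theory Defs
  imports Main
begin

definition binary :: "nat list \<Rightarrow> bool" where
  "binary r \<longleftrightarrow> set r \<subseteq> {0, 1}"

definition top_full :: "nat \<Rightarrow> nat list \<Rightarrow> bool" where
  "top_full k r \<longleftrightarrow> (\<exists>r'. r = replicate k 1 @ r')"

fun zipseq :: "'a list \<Rightarrow> 'a list \<Rightarrow> 'a list" where
  "zipseq (x # xs) (y # ys) = x # y # zipseq xs ys"
| "zipseq xs [] = xs"
| "zipseq [] ys = ys"

text \<open>With 0-based list indices, the 1-based pair (z_{2i}, z_{2i+1}) is at positions
  (2i-1, 2i); for i = 1..m these are exactly the positions 1..2m.\<close>
definition oe_combine :: "nat \<Rightarrow> nat list \<Rightarrow> nat list \<Rightarrow> nat list" where
  "oe_combine K a b =
     (let z = zipseq a b; m = min K (length z - 1) div 2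
      in map (\<lambda>j. if 1 \<le> j \<and> j \<le> 2 * m
                    then (if odd j then max (z ! j) (z ! (j + 1))
                          else min (z ! (j - 1)) (z ! j))
                    else z ! j) [0..<length z])"

end

theory Submission
  imports Defs
begin

lemma zs_len: "length (zipseq a b) = length a + length b"
  by (induction a b rule: zipseq.induct) auto

lemma zs_set: "set (zipseq a b) \<subseteq> set a \<union> set b"
  by (induction a b rule: zipseq.induct) auto

lemma zs_even: "i < length b \<Longrightarrow> length b \<le> length a \<Longrightarrow> zipseq a b ! (2*i) = a ! i"
proof (induction a b arbitrary: i rule: zipseq.induct)
  case (1 x xs y ys) then show ?case by (cases i) auto
qed auto

lemma zs_odd: "i < length b \<Longrightarrow> length b \<le> length a \<Longrightarrow> zipseq a b ! (2*i+1) = b ! i"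
proof (induction a b arbitrary: i rule: zipseq.induct)
  case (1 x xs y ys) then show ?case by (cases i) auto
qed auto

lemma zs_beyond: "length b \<le> length a \<Longrightarrow> 2 * length b \<le> j \<Longrightarrow>
   zipseq a b ! j = a ! (j - length b)"
proof (induction a b arbitrary: j rule: zipseq.induct)
  case (1 x xs y ys)
  then obtain j' where "j = Suc (Suc j')" "2 * length ys \<le> j'"
    by (cases j; cases "j - 1") auto
  then show ?case using 1 by auto
qed auto

lemma zs_a: "length b \<le> length a \<Longrightarrow> i < length a \<Longrightarrow> zipseq a b ! (if i < length b then 2*i else i + length b) = a ! i"
  using zs_even[of i b a] zs_beyond[of b a "i + length b"] by auto

lemma tf_nth: "top_full n r \<Longrightarrow> j < n \<Longrightarrow> r ! j = 1"
  unfolding top_full_def by (auto simp: nth_append)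

lemma tf_len: "top_full n r \<Longrightarrow> n \<le> length r"
  unfolding top_full_def by auto

lemma tf_intro: "n \<le> length r \<Longrightarrow> (\<And>j. j < n \<Longrightarrow> r ! j = 1) \<Longrightarrow> top_full n r"
  unfolding top_full_def
proof -
  assume a: "n \<le> length r" and b: "\<And>j. j < n \<Longrightarrow> r ! j = 1"
  have "take n r = replicate n 1" using a b by (simp add: list_eq_iff_nth_eq)
  then have "r = replicate n 1 @ drop n r" by (metis append_take_drop_id)
  then show "\<exists>r'. r = replicate n 1 @ r'" by blast
qed
theorem mainTheorem6:
  fixes K k l :: nat and a b :: "nat list"
  assumes "K \<ge> k + l" and "k \<le> l" and "l - k \<le> 2"
    and "binary a" and "binary b" and "length a \<ge> length b"
    and "top_full l a" and "top_full k b"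
  shows "top_full (l + k) (oe_combine K a b)"
proof -
  define z where "z = zipseq a b"
  define m where "m = min K (length z - 1) div 2"
  have lz: "length z = length a + length b" using zs_len z_def by simp
  have la: "l \<le> length a" and lb: "k \<le> length b" using assms tf_len by auto
  have bin: "\<And>i. i < length z \<Longrightarrow> z ! i \<le> 1"
  proof -
    fix i assume "i < length z"
    then have "z ! i \<in> set z" by (rule nth_mem)
    then have "z ! i \<in> set a \<union> set b" using zs_set[of a b] unfolding z_def by blast
    then show "z ! i \<le> 1" using assms(4,5) unfolding binary_def by auto
  qed
  have A: "z ! (if i < length b then 2*i else i + length b) = 1" if "i < l" for i
    using zs_a[of b a i] assms(6) tf_nth[OF assms(7), of i] la that unfolding z_def by auto
  have B: "z ! (2*i+1) = 1" if "i < k" for i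
    using zs_odd[of i b a] assms(6) tf_nth[OF assms(8), of i] lb that unfolding z_def by auto
  have one: "z ! j = 1" if "j < l + k" "j \<noteq> 2*k+1 \<or> length b = k" for j
  proof (cases "even j")
    case True
    then obtain i where i: "j = 2*i" by blast
    have "i < l" using that i assms by auto
    show ?thesis
    proof (cases "i < length b")
      case True then show ?thesis using A[of i] \<open>i<l\<close> i by auto
    next
      case False
      then have "i \<ge> k" using lb by auto
      then have "i = k" using that i assms by auto
      then have "length b = k" using False lb by auto
      then show ?thesis using A[of k] \<open>i<l\<close> \<open>i = k\<close> i by (simp add: mult_2)
    qed
  next
    case False
    then obtain i where i: "j = 2*i+1" by (metis oddE)
    show ?thesis
    proof (cases "i < k")
      case True then show ?thesis using B i by auto
    next
      case False
      then have "i = k" "length b = k" "l = k + 2" using that i assms by auto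
      then show ?thesis using A[of "k+1"] i by (simp add: mult_2)
    qed
  qed
  have extra: "z ! (2*k+2) = 1 \<and> 2*k+1 \<le> 2*m" if "l = k + 2" "length b > k"
  proof
    have "k + 1 < l" using that by auto
    show "z ! (2*k+2) = 1"
    proof (cases "k + 1 < length b")
      case True then show ?thesis using A[of "k+1"] \<open>k+1<l\<close> by (auto simp: algebra_simps)
    next
      case False
      then have "length b = k+1" using that by auto
      then show ?thesis using A[of "k+1"] \<open>k+1<l\<close> by (simp add: mult_2)
    qed
    have "length z \<ge> 2*k+3" using lz la that by auto
    then have "min K (length z - 1) \<ge> 2*k+2" using assms that by auto
    then show "2*k+1 \<le> 2*m" unfolding m_def by linarith
  qed
  have m_le: "2*m \<le> length z - 1" unfolding m_def by linarith
  have oe: "oe_combine K a b = map (\<lambda>j. if 1 \<le> j \<and> j \<le> 2 * m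
                    then (if odd j then max (z ! j) (z ! (j + 1))
                          else min (z ! (j - 1)) (z ! j))
                    else z ! j) [0..<length z]"
    unfolding oe_combine_def z_def m_def Let_def by (rule refl)
  have lzk: "l + k \<le> length z" using lz la lb by auto
  have oe_nth: "oe_combine K a b ! j = (if 1 \<le> j \<and> j \<le> 2 * m
                    then (if odd j then max (z ! j) (z ! (j + 1))
                          else min (z ! (j - 1)) (z ! j))
                    else z ! j)" if "j < length z" for j
    unfolding oe using that by (simp del: upt_Suc)
  show ?thesis
  proof (rule tf_intro)
    show "l + k \<le> length (oe_combine K a b)" unfolding oe using lzk by (simp del: upt_Suc)
  next
    fix j assume j: "j < l + k"
    show "oe_combine K a b ! j = 1"
    proof (cases "j \<noteq> 2*k+1 \<or> length b = k")
      case True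
      then have zj: "z ! j = 1" using one[OF j] by blast
      show ?thesis
      proof (cases "1 \<le> j \<and> j \<le> 2 * m")
        case pr: True
        show ?thesis
        proof (cases "odd j")
          case True
          then have "j + 1 < length z" using pr m_le proof -
            have "j \<noteq> 2*m" using True by auto
            then show ?thesis using pr m_le by linarith
          qed
          then have "z ! (j+1) \<le> 1" using bin by auto
          then have "j < length z" using j lzk by linarith
          then show ?thesis using oe_nth[of j] pr True zj \<open>z ! (j+1) \<le> 1\<close> by simp
        next
          case False
          have "j - 1 \<noteq> 2*k+1" using j assms(2,3) by linarith
          moreover have "j - 1 < l + k" using j by linarith
          ultimately have "z ! (j-1) = 1" using one by blast
          moreover have "j < length z" using j lzk by linarith
          ultimately show ?thesis using oe_nth[of j] pr False zj by simp
        qed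
      next
        case False
        have "j < length z" using j lzk by linarith
        then have "oe_combine K a b ! j = z ! j" by (rule trans[OF oe_nth if_not_P[OF False]])
        then show ?thesis using zj by simp
      qed
    next
      case False
      then have jj: "j = 2*k+1" "length b > k" using lb by auto
      then have "l = k + 2" using j assms(2,3) by linarith
      then have e: "z ! (2*k+2) = 1" "2*k+1 \<le> 2*m" using extra jj(2) by auto
      have "z ! j \<le> 1" using bin j lzk by simp
      moreover have "j < length z" using j lzk by linarith
      ultimately show ?thesis using oe_nth[of j] e jj by (simp add: max_def)
    qed
  qed
qed

end
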